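(* Let $(x,b)$ be a \textsc{Set Radius Strip Cover} instance with $n$ sensors and optimal lifetime $T$. Add two dummy sensors: sensor $0$ with $x_0=0$, $b_0=0$, and sensor $n+1$ with $x_{n+1}=1$, $b_{n+1}=0$. Then there exist $i,k\in\{0,\ldots,n+1\}$ with $i<k$ and $x_i<x_k$ such that $T=\frac{b_k+b_i}{x_k-x_i}$.
   Context: \textsc{Set Radius Strip Cover}: An instance is a pair $(x,b)$, where $x=(x_1,\ldots,x_n)\in[0,1]^n$ with $x_1\le\cdots\le x_n$ are sensor locations and $b=(b_1,\ldots,b_n)$, $b_i\ge0$ rational, are battery charges. A solution is a radial assignment $\rho\in[0,\infty)^n$; all sensors are activated at time $0$. Sensor $i$ with $\rho_i>0$ covers $[x_i-\rho_i,x_i+\rho_i]$ during $[0,b_i/\rho_i]$; a sensor with $\rho_i=0$ is inactive and covers nothing. The lifetime of $\rho$ is the maximum $T$ such that for every $t\in[0,T]$, $[0,1]\subseteq\bigcup_{i:\rho_i>0,\ b_i/\rho_i\ge t}[x_i-\rho_i,x_i+\rho_i]$; the optimal lifetime is the maximum lifetime over all radial assignments. *)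

theory Defs
  imports Complex_Main
begin

definition srsc_instance :: "nat \<Rightarrow> (nat \<Rightarrow> real) \<Rightarrow> (nat \<Rightarrow> real) \<Rightarrow> bool" where
  "srsc_instance n x b \<longleftrightarrow>
     (\<forall>i\<in>{1..n}. 0 \<le> x i \<and> x i \<le> 1 \<and> 0 \<le> b i \<and> b i \<in> \<rat>) \<and>
     (\<forall>i\<in>{1..n}. \<forall>j\<in>{1..n}. i \<le> j \<longrightarrow> x i \<le> x j)"

definition radial_assignment :: "nat \<Rightarrow> (nat \<Rightarrow> real) \<Rightarrow> bool" where
  "radial_assignment n \<rho> \<longleftrightarrow> (\<forall>i\<in>{1..n}. 0 \<le> \<rho> i)"

definition covered_at :: "nat \<Rightarrow> (nat \<Rightarrow> real) \<Rightarrow> (nat \<Rightarrow> real) \<Rightarrow> (nat \<Rightarrow> real) \<Rightarrow> real \<Rightarrow> bool" where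
  "covered_at n x b \<rho> t \<longleftrightarrow>
     {0..1} \<subseteq> (\<Union>i\<in>{i\<in>{1..n}. 0 < \<rho> i \<and> t \<le> b i / \<rho> i}. {x i - \<rho> i .. x i + \<rho> i})"

definition survives :: "nat \<Rightarrow> (nat \<Rightarrow> real) \<Rightarrow> (nat \<Rightarrow> real) \<Rightarrow> (nat \<Rightarrow> real) \<Rightarrow> real \<Rightarrow> bool" where
  "survives n x b \<rho> T \<longleftrightarrow> (\<forall>t\<in>{0..T}. covered_at n x b \<rho> t)"

definition is_lifetime :: "nat \<Rightarrow> (nat \<Rightarrow> real) \<Rightarrow> (nat \<Rightarrow> real) \<Rightarrow> (nat \<Rightarrow> real) \<Rightarrow> real \<Rightarrow> bool" where
  "is_lifetime n x b \<rho> L \<longleftrightarrow> survives n x b \<rho> L \<and> (\<forall>T. survives n x b \<rho> T \<longrightarrow> T \<le> L)"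

definition is_optimal_lifetime :: "nat \<Rightarrow> (nat \<Rightarrow> real) \<Rightarrow> (nat \<Rightarrow> real) \<Rightarrow> real \<Rightarrow> bool" where
  "is_optimal_lifetime n x b T \<longleftrightarrow>
     (\<exists>\<rho>. radial_assignment n \<rho> \<and> is_lifetime n x b \<rho> T) \<and>
     (\<forall>\<rho> L. radial_assignment n \<rho> \<and> is_lifetime n x b \<rho> L \<longrightarrow> L \<le> T)"

definition ext_loc :: "nat \<Rightarrow> (nat \<Rightarrow> real) \<Rightarrow> nat \<Rightarrow> real" where
  "ext_loc n x i = (if i = 0 then 0 else if i = n + 1 then 1 else x i)"

definition ext_bat :: "nat \<Rightarrow> (nat \<Rightarrow> real) \<Rightarrow> nat \<Rightarrow> real" where
  "ext_bat n b i = (if i = 0 then 0 else if i = n + 1 then 0 else b i)"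

end

theory Submission
  imports Defs "HOL-Analysis.Analysis"
begin

lemma interior_cover:
  fixes A :: "nat set" and c r :: "nat \<Rightarrow> real"
  assumes fin: "finite A"
    and cov: "\<forall>p\<in>{0..1}. \<exists>i\<in>A. \<bar>p - c i\<bar> \<le> r i"
    and h1: "\<forall>i\<in>A. c i + r i \<noteq> 1"
    and h0: "\<forall>i\<in>A. c i - r i \<noteq> 0"
    and h2: "\<forall>i\<in>A. \<forall>k\<in>A. c i + r i \<noteq> c k - r k"
    and p: "p \<in> {0..1}"
  shows "\<exists>i\<in>A. \<bar>p - c i\<bar> < r i"
proof (rule ccontr)
  assume nint: "\<not> (\<exists>i\<in>A. \<bar>p - c i\<bar> < r i)"
  obtain i where iA: "i \<in> A" and ci: "\<bar>p - c i\<bar> \<le> r i" using cov p by blast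
  have "p = c i + r i \<or> p = c i - r i" using nint iA ci by force
  then show False
  proof
    assume pe: "p = c i + r i"
    have "p < 1" using h1 iA pe p by auto
    define S where "S = {c k - r k | k. k \<in> A \<and> c k - r k > p}"
    have finS: "finite S" unfolding S_def using fin by simp
    define m where "m = Min (insert 1 S)"
    have mle: "m \<le> 1" unfolding m_def using finS by simp
    have mgt: "p < m" unfolding m_def using finS \<open>p < 1\<close> by (auto simp: S_def)
    define q where "q = (p + m) / 2"
    have q01: "q \<in> {0..1}" using p mle mgt unfolding q_def by auto
    obtain k where kA: "k \<in> A" and ck: "\<bar>q - c k\<bar> \<le> r k" using cov q01 by blast
    have "c k - r k \<le> p"
    proof (rule ccontr)
      assume "\<not> c k - r k \<le> p"
      then have "c k - r k \<in> S" unfolding S_def using kA by auto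
      then have "m \<le> c k - r k" unfolding m_def using finS by simp
      then show False using ck mgt unfolding q_def by (auto simp add: abs_le_iff field_simps)
    qed
    moreover have "c k + r k > p" using ck mgt unfolding q_def by (auto simp add: abs_le_iff field_simps)
    ultimately have "c k - r k = p" using nint kA by force
    then have "c i + r i = c k - r k" using pe by simp
    then show False using h2 iA kA by blast
  next
    assume pe: "p = c i - r i"
    have "0 < p" using h0 iA pe p by auto
    define S where "S = {c k + r k | k. k \<in> A \<and> c k + r k < p}"
    have finS: "finite S" unfolding S_def using fin by simp
    define m where "m = Max (insert 0 S)"
    have mle: "0 \<le> m" unfolding m_def using finS by simp
    have mgt: "m < p" unfolding m_def using finS \<open>0 < p\<close> by (auto simp: S_def)
    define q where "q = (p + m) / 2"
    have q01: "q \<in> {0..1}" using p mle mgt unfolding q_def by auto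
    obtain k where kA: "k \<in> A" and ck: "\<bar>q - c k\<bar> \<le> r k" using cov q01 by blast
    have "c k + r k \<ge> p"
    proof (rule ccontr)
      assume "\<not> c k + r k \<ge> p"
      then have "c k + r k \<in> S" unfolding S_def using kA by auto
      then have "c k + r k \<le> m" unfolding m_def using finS by simp
      then show False using ck mgt unfolding q_def by (auto simp add: abs_le_iff field_simps)
    qed
    moreover have "c k - r k < p" using ck mgt unfolding q_def by (auto simp add: abs_le_iff field_simps)
    ultimately have "c k + r k = p" using nint kA by force
    then have "c k + r k = c i - r i" using pe by simp
    then show False using h2 iA kA by blast
  qed
qed

lemma uniform_cover:
  fixes A :: "nat set" and c r :: "nat \<Rightarrow> real"
  assumes fin: "finite A"
    and cov: "\<forall>p\<in>{0..1}. \<exists>i\<in>A. \<bar>p - c i\<bar> < r i"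
  shows "\<exists>e>0. \<forall>p\<in>{0..1::real}. \<exists>i\<in>A. \<bar>p - c i\<bar> \<le> r i - e"
proof -
  have sub: "{0..1::real} \<subseteq> \<Union>((\<lambda>i. ball (c i) (r i)) ` A)"
    using cov by (force simp: dist_real_def)
  obtain \<epsilon> where ep: "0 < \<epsilon>"
    and H: "\<And>p. p \<in> {0..1::real} \<Longrightarrow> \<exists>G \<in> (\<lambda>i. ball (c i) (r i)) ` A. ball p \<epsilon> \<subseteq> G"
    using Heine_Borel_lemma[OF compact_Icc sub] by blast
  have "\<forall>p\<in>{0..1::real}. \<exists>i\<in>A. \<bar>p - c i\<bar> \<le> r i - \<epsilon>/2"
  proof
    fix p :: real assume "p \<in> {0..1}"
    then obtain i where iA: "i \<in> A" and bs: "ball p \<epsilon> \<subseteq> ball (c i) (r i)" using H by blast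
    define q where "q = (if p \<ge> c i then p + \<epsilon>/2 else p - \<epsilon>/2)"
    have "q \<in> ball p \<epsilon>" using ep by (simp add: q_def dist_real_def)
    then have "q \<in> ball (c i) (r i)" using bs by blast
    then have "\<bar>c i - q\<bar> < r i" by (simp add: dist_real_def)
    then have "\<bar>p - c i\<bar> \<le> r i - \<epsilon>/2" unfolding q_def by (auto split: if_splits)
    then show "\<exists>i\<in>A. \<bar>p - c i\<bar> \<le> r i - \<epsilon>/2" using iA by blast
  qed
  then show ?thesis using ep by (intro exI[of _ "\<epsilon>/2"]) auto
qed

theorem lemma11:
  fixes n :: nat and x b :: "nat \<Rightarrow> real" and T :: real
  assumes "srsc_instance n x b"
    and "is_optimal_lifetime n x b T"
  shows "\<exists>i k. i < k \<and> k \<le> n + 1 \<and> ext_loc n x i < ext_loc n x k \<and>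
           T = (ext_bat n b k + ext_bat n b i) / (ext_loc n x k - ext_loc n x i)"
proof -
  obtain \<rho> where rad: "radial_assignment n \<rho>" and lt: "is_lifetime n x b \<rho> T"
    using assms(2) unfolding is_optimal_lifetime_def by blast
  have opt: "\<And>\<rho> L. radial_assignment n \<rho> \<Longrightarrow> is_lifetime n x b \<rho> L \<Longrightarrow> L \<le> T"
    using assms(2) unfolding is_optimal_lifetime_def by blast
  have sorted: "\<And>i j. i \<in> {1..n} \<Longrightarrow> j \<in> {1..n} \<Longrightarrow> i \<le> j \<Longrightarrow> x i \<le> x j"
    using assms(1) unfolding srsc_instance_def by blast
  have T0: "T \<ge> 0"
  proof (rule ccontr)
    assume "\<not> T \<ge> 0"
    then have "survives n x b \<rho> (T/2)" unfolding survives_def by auto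
    then have "T/2 \<le> T" using lt unfolding is_lifetime_def by blast
    then show False using \<open>\<not> T \<ge> 0\<close> by auto
  qed
  have covT: "covered_at n x b \<rho> T"
  proof -
    have "T \<in> {0..T}" using T0 by simp
    then show ?thesis using lt unfolding is_lifetime_def survives_def by blast
  qed
  show ?thesis
  proof (cases "T = 0")
    case True
    then show ?thesis by (intro exI[of _ 0] exI[of _ "n+1"]) (simp add: ext_loc_def ext_bat_def)
  next
    case False
    then have Tp: "T > 0" using T0 by auto
    show ?thesis
    proof (rule ccontr)
      assume nH: "\<not> ?thesis"
      have H: "\<And>i k. i < k \<Longrightarrow> k \<le> n + 1 \<Longrightarrow> ext_loc n x i < ext_loc n x k \<Longrightarrow>
           T \<noteq> (ext_bat n b k + ext_bat n b i) / (ext_loc n x k - ext_loc n x i)"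
        using nH by blast
      define A where "A = {i\<in>{1..n}. 0 < \<rho> i \<and> T \<le> b i / \<rho> i}"
      define r where "r i = b i / T" for i
      have finA: "finite A" unfolding A_def by simp
      have bpos: "\<And>i. i \<in> A \<Longrightarrow> b i > 0"
      proof -
        fix i assume "i \<in> A"
        then have "0 < \<rho> i" "T \<le> b i / \<rho> i" unfolding A_def by auto
        then have "T * \<rho> i \<le> b i" by (simp add: le_divide_eq)
        moreover have "T * \<rho> i > 0" using Tp \<open>0 < \<rho> i\<close> by simp
        ultimately show "b i > 0" by linarith
      qed
      have rpos: "\<And>i. i \<in> A \<Longrightarrow> r i > 0" using bpos Tp by (simp add: r_def)
      have rhor: "\<And>i. i \<in> A \<Longrightarrow> \<rho> i \<le> r i"
      proof -
        fix i assume "i \<in> A"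
        then have "0 < \<rho> i" "T \<le> b i / \<rho> i" unfolding A_def by auto
        then have "T * \<rho> i \<le> b i" by (simp add: le_divide_eq)
        then show "\<rho> i \<le> r i" using Tp unfolding r_def by (simp add: le_divide_eq mult.commute)
      qed
      have Ain: "\<And>i. i \<in> A \<Longrightarrow> i \<in> {1..n}" unfolding A_def by auto
      have el: "\<And>i. i \<in> A \<Longrightarrow> ext_loc n x i = x i \<and> ext_bat n b i = b i"
        using Ain by (fastforce simp: ext_loc_def ext_bat_def)
      have cov: "\<forall>p\<in>{0..1}. \<exists>i\<in>A. \<bar>p - x i\<bar> \<le> r i"
      proof
        fix p :: real assume "p \<in> {0..1}"
        then obtain i where "i \<in> A" "p \<in> {x i - \<rho> i .. x i + \<rho> i}"
          using covT unfolding covered_at_def A_def by blast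
        then show "\<exists>i\<in>A. \<bar>p - x i\<bar> \<le> r i" using rhor[of i] by (intro bexI[of _ i]) auto
      qed
      have h1: "\<forall>i\<in>A. x i + r i \<noteq> 1"
      proof (intro ballI notI)
        fix i assume iA: "i \<in> A" and eq: "x i + r i = 1"
        have "i < n + 1" using Ain[OF iA] by auto
        moreover have "ext_loc n x i < ext_loc n x (n+1)" using el[OF iA] rpos[OF iA] eq
          by (simp add: ext_loc_def)
        moreover have "T = (ext_bat n b (n+1) + ext_bat n b i) / (ext_loc n x (n+1) - ext_loc n x i)"
        proof -
          have "1 - x i = b i / T" using eq r_def by simp
          then show ?thesis using el[OF iA] bpos[OF iA] Tp by (simp add: ext_loc_def ext_bat_def)
        qed
        ultimately show False using H[of i "n+1"] by auto
      qed
      have h0: "\<forall>i\<in>A. x i - r i \<noteq> 0"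
      proof (intro ballI notI)
        fix i assume iA: "i \<in> A" and eq: "x i - r i = 0"
        have "0 < i" using Ain[OF iA] by auto
        moreover have "i \<le> n + 1" using Ain[OF iA] by auto
        moreover have "ext_loc n x 0 < ext_loc n x i" using el[OF iA] rpos[OF iA] eq
          by (simp add: ext_loc_def)
        moreover have "T = (ext_bat n b i + ext_bat n b 0) / (ext_loc n x i - ext_loc n x 0)"
        proof -
          have "x i = b i / T" using eq r_def by simp
          then show ?thesis using el[OF iA] bpos[OF iA] Tp by (simp add: ext_loc_def ext_bat_def)
        qed
        ultimately show False using H[of 0 i] by auto
      qed
      have h2: "\<forall>i\<in>A. \<forall>k\<in>A. x i + r i \<noteq> x k - r k"
      proof (intro ballI notI)
        fix i k assume iA: "i \<in> A" and kA: "k \<in> A" and eq: "x i + r i = x k - r k"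
        have lt': "x i < x k" using eq rpos[OF iA] rpos[OF kA] by linarith
        have "i < k"
        proof (rule ccontr)
          assume "\<not> i < k"
          then have "x k \<le> x i" using sorted[OF Ain[OF kA] Ain[OF iA]] by simp
          then show False using lt' by simp
        qed
        moreover have "k \<le> n + 1" using Ain[OF kA] by auto
        moreover have "ext_loc n x i < ext_loc n x k" using el[OF iA] el[OF kA] lt' by simp
        moreover have "T = (ext_bat n b k + ext_bat n b i) / (ext_loc n x k - ext_loc n x i)"
        proof -
          have "x k - x i = (b k + b i) / T" using eq r_def by (simp add: add_divide_distrib)
          then show ?thesis using el[OF iA] el[OF kA] bpos[OF iA] bpos[OF kA] Tp by simp
        qed
        ultimately show False using H[of i k] by auto
      qed
      have int: "\<forall>p\<in>{0..1}. \<exists>i\<in>A. \<bar>p - x i\<bar> < r i"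
        using interior_cover[OF finA cov h1 h0 h2] by blast
      obtain e where ep: "e > 0" and U: "\<forall>p\<in>{0..1::real}. \<exists>i\<in>A. \<bar>p - x i\<bar> \<le> r i - e"
        using uniform_cover[OF finA int] by blast
      define B where "B = sum b A"
      have bB: "\<And>i. i \<in> A \<Longrightarrow> b i \<le> B"
        unfolding B_def using finA bpos by (intro member_le_sum) (auto intro: less_imp_le)
      obtain i0 where i0: "i0 \<in> A" "\<bar>0 - x i0\<bar> \<le> r i0 - e"
        using bspec[OF U, of 0] by auto
      have Bp: "B > 0" using bB[OF i0(1)] bpos[OF i0(1)] by linarith
      have "e \<le> r i0" using i0 by linarith
      also have "\<dots> \<le> B / T" unfolding r_def using bB[OF i0(1)] Tp by (simp add: divide_right_mono)
      finally have eB: "e / B \<le> 1 / T" using Bp Tp by (simp add: field_simps)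
      define s where "s = 1 / T - e / (2 * B)"
      have "e/(2*B) < e/B" using ep Bp by (simp add: field_simps)
      then have sp: "s > 0" using eB unfolding s_def by linarith
      have sl: "s < 1 / T" using ep Bp unfolding s_def by simp
      define T' where "T' = 1 / s"
      have TT': "T < T'"
      proof -
        have "1 / (1/T) < 1 / s" using sl sp Tp by (intro divide_strict_left_mono) auto
        then show ?thesis unfolding T'_def using Tp by simp
      qed
      have bs: "\<And>i. i \<in> A \<Longrightarrow> r i - e \<le> b i * s"
      proof -
        fix i assume iA: "i \<in> A"
        have "b i * (e / (2 * B)) \<le> B * (e / (2*B))"
          using bB[OF iA] ep Bp by (intro mult_right_mono) auto
        also have "\<dots> = e / 2" using Bp by simp
        finally have "b i * (e / (2 * B)) \<le> e / 2" .
        then show "r i - e \<le> b i * s" unfolding s_def r_def using ep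
          by (simp add: right_diff_distrib)
      qed
      define \<rho>' where "\<rho>' i = (if i \<in> A then b i * s else 0)" for i
      have rad': "radial_assignment n \<rho>'"
        unfolding radial_assignment_def \<rho>'_def using bpos sp by (auto intro: less_imp_le)
      have ratio: "\<And>i. i \<in> A \<Longrightarrow> b i / \<rho>' i = T'"
      proof -
        fix i assume iA: "i \<in> A"
        show "b i / \<rho>' i = T'" unfolding \<rho>'_def T'_def using bpos[OF iA] sp iA by (simp add: field_simps)
      qed
      have surv: "survives n x b \<rho>' T'"
        unfolding survives_def covered_at_def
      proof (intro ballI subsetI)
        fix t p assume t: "t \<in> {0..T'}" and p: "p \<in> {0::real..1}"
        then obtain i where iA: "i \<in> A" and pi: "\<bar>p - x i\<bar> \<le> r i - e" using U by blast
        have "\<bar>p - x i\<bar> \<le> \<rho>' i" using pi bs[OF iA] iA by (simp add: \<rho>'_def)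
        moreover have "0 < \<rho>' i" using iA bpos[OF iA] sp by (simp add: \<rho>'_def)
        moreover have "t \<le> b i / \<rho>' i" using ratio[OF iA] t by simp
        ultimately show "p \<in> (\<Union>i\<in>{i\<in>{1..n}. 0 < \<rho>' i \<and> t \<le> b i / \<rho>' i}. {x i - \<rho>' i .. x i + \<rho>' i})"
          using Ain[OF iA] by (intro UN_I[of i]) auto
      qed
      have maxl: "\<forall>T''. survives n x b \<rho>' T'' \<longrightarrow> T'' \<le> T'"
      proof (intro allI impI)
        fix T'' assume sv: "survives n x b \<rho>' T''"
        show "T'' \<le> T'"
        proof (rule ccontr)
          assume "\<not> T'' \<le> T'"
          then have T''p: "T'' > T'" "T'' \<ge> 0" using TT' Tp by auto
          then have "covered_at n x b \<rho>' T''" using sv unfolding survives_def by auto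
          then obtain i where "i \<in> {1..n}" "0 < \<rho>' i" "T'' \<le> b i / \<rho>' i"
            unfolding covered_at_def by fastforce
          moreover then have "i \<in> A" by (simp add: \<rho>'_def split: if_splits)
          ultimately show False using ratio T''p by auto
        qed
      qed
      have "T' \<le> T" using opt[OF rad'] surv maxl unfolding is_lifetime_def by blast
      then show False using TT' by simp
    qed
  qed
qed

end
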